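(* Let $A$ be a unital associative $\Bbbk$-algebra, $a\in Z(A)$, $\sigma\in Aut(A)$, and $W_{a,\sigma}$ the generalized Weyl algebra. Let $S\subseteq Z(A)$ be the set of elements $\sigma^n(a^m)$ with $n\in\mathbb{Z}$, $m\in\mathbb{N}$, and let $(W_{a,\sigma})_S$ be the localization of $W_{a,\sigma}$ at $S$. Let $V$ be an arbitrary (right) $W_{a,\sigma}$-module and $h=ht_{a,\sigma}(V)$. Then $V_S:=V\otimes_{W_{a,\sigma}}(W_{a,\sigma})_S$ is isomorphic to $(V/V^{[h]})_S$.
   Context: The generalized Weyl algebra $W_{a,\sigma}$ is the algebra generated by $A$ and indeterminates $x,y$ with relations $yx=a$, $xy=\sigma(a)$, $xu=\sigma(u)x$, $y\sigma(u)=uy$ for $u\in A$. For a right $W_{a,\sigma}$-module $V$ and $\ell\in\mathbb{N}$, set $V^{[\ell]}=\{v\in V : v\triangleleft a\sigma^{-1}(a)\cdots\sigma^{-\ell}(a)=0\}$, and $V^{[\infty]}=\bigcup_{\ell\geq 0}V^{[\ell]}$. The height $ht_{a,\sigma}(V)$ is the smallest integer $\ell$ with $V^{[\ell]}=V^{[\infty]}$, and $\infty$ if no such integer exists (in which case $V^{[h]}$ means $V^{[\infty]}$). For a $W_{a,\sigma}$-module $U$, $U_S:=U\otimes_{W_{a,\sigma}}(W_{a,\sigma})_S$.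
   Formalization: $V/V^{[h]}$ is the quotient of V by the $W_{a,\sigma}$-submodule generated by $V^{[h]}$, and $(W_{a,\sigma})_S$ is any given right ring of fractions of $W_{a,\sigma}$ with respect to the multiplicative closure of S. Each condition added here is assumed in the paper as well or is needed for the statement above to hold. *)

theory Defs
  imports "HOL-Algebra.Algebra" "HOL-Library.Poly_Mapping" "HOL-Library.Extended_Nat"
begin

definition center :: "('a, 'b) ring_scheme \<Rightarrow> 'a set" where
  "center A = {c \<in> carrier A. \<forall>u \<in> carrier A. c \<otimes>\<^bsub>A\<^esub> u = u \<otimes>\<^bsub>A\<^esub> c}"

definition sigma_pow :: "('a, 'b) ring_scheme \<Rightarrow> ('a \<Rightarrow> 'a) \<Rightarrow> int \<Rightarrow> 'a \<Rightarrow> 'a" where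
  "sigma_pow A \<sigma> n = (if 0 \<le> n then \<sigma> ^^ nat n else inv_into (carrier A) \<sigma> ^^ nat (- n))"

definition S_set :: "('a, 'b) ring_scheme \<Rightarrow> ('a \<Rightarrow> 'a) \<Rightarrow> 'a \<Rightarrow> 'a set" where
  "S_set A \<sigma> a = {sigma_pow A \<sigma> n (a [^]\<^bsub>A\<^esub> (m::nat)) | n m. True}"

inductive_set mult_closure :: "('a, 'b) ring_scheme \<Rightarrow> 'a set \<Rightarrow> 'a set"
  for A :: "('a, 'b) ring_scheme" and S :: "'a set" where
  one: "\<one>\<^bsub>A\<^esub> \<in> mult_closure A S"
| gen: "s \<in> S \<Longrightarrow> s \<in> mult_closure A S"
| mult: "s \<in> mult_closure A S \<Longrightarrow> t \<in> mult_closure A S \<Longrightarrow> s \<otimes>\<^bsub>A\<^esub> t \<in> mult_closure A S"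

text \<open>Symbols: Inl u stands for the element u of A, Inr True for x, Inr False for y.
  The free (noncommutative) ring on these symbols is the monoid ring Z[words].\<close>

type_synonym 'a fword = "('a + bool) list \<Rightarrow>\<^sub>0 int"

definition fconv :: "'a fword \<Rightarrow> 'a fword \<Rightarrow> 'a fword" where
  "fconv p q = (\<Sum>u\<in>Poly_Mapping.keys p. \<Sum>v\<in>Poly_Mapping.keys q.
      Poly_Mapping.single (u @ v) (Poly_Mapping.lookup p u * Poly_Mapping.lookup q v))"

definition free_ring :: "'a fword ring" where
  "free_ring = \<lparr>carrier = UNIV, monoid.mult = fconv, one = Poly_Mapping.single [] 1,
                ring.zero = 0, ring.add = (+)\<rparr>"

definition letter :: "('a + bool) \<Rightarrow> 'a fword" where
  "letter s = Poly_Mapping.single [s] 1"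

abbreviation "gx \<equiv> letter (Inr True)"
abbreviation "gy \<equiv> letter (Inr False)"

text \<open>Defining relations (elements required to become zero): A embeds as a unital
  subring (symbols not in the carrier of A are killed), yx = a, xy = sigma(a),
  x u = sigma(u) x, y sigma(u) = u y.\<close>
definition gwa_rels :: "('a, 'b) ring_scheme \<Rightarrow> ('a \<Rightarrow> 'a) \<Rightarrow> 'a \<Rightarrow> 'a fword set" where
  "gwa_rels A \<sigma> a =
     {letter (Inl u) | u. u \<notin> carrier A}
   \<union> {letter (Inl (u \<oplus>\<^bsub>A\<^esub> v)) - letter (Inl u) - letter (Inl v) | u v. u \<in> carrier A \<and> v \<in> carrier A}
   \<union> {letter (Inl (u \<otimes>\<^bsub>A\<^esub> v)) - fconv (letter (Inl u)) (letter (Inl v)) | u v. u \<in> carrier A \<and> v \<in> carrier A}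
   \<union> {letter (Inl \<one>\<^bsub>A\<^esub>) - Poly_Mapping.single [] 1}
   \<union> {fconv gy gx - letter (Inl a)}
   \<union> {fconv gx gy - letter (Inl (\<sigma> a))}
   \<union> {fconv gx (letter (Inl u)) - fconv (letter (Inl (\<sigma> u))) gx | u. u \<in> carrier A}
   \<union> {fconv gy (letter (Inl (\<sigma> u))) - fconv (letter (Inl u)) gy | u. u \<in> carrier A}"

definition gwa_ideal :: "('a, 'b) ring_scheme \<Rightarrow> ('a \<Rightarrow> 'a) \<Rightarrow> 'a \<Rightarrow> 'a fword set" where
  "gwa_ideal A \<sigma> a = genideal free_ring (gwa_rels A \<sigma> a)"

definition GWA :: "('a, 'b) ring_scheme \<Rightarrow> ('a \<Rightarrow> 'a) \<Rightarrow> 'a \<Rightarrow> 'a fword set ring" where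
  "GWA A \<sigma> a = free_ring Quot (gwa_ideal A \<sigma> a)"

definition gwa_incl :: "('a, 'b) ring_scheme \<Rightarrow> ('a \<Rightarrow> 'a) \<Rightarrow> 'a \<Rightarrow> 'a \<Rightarrow> 'a fword set" where
  "gwa_incl A \<sigma> a u = gwa_ideal A \<sigma> a +>\<^bsub>free_ring\<^esub> letter (Inl u)"

record ('m, 'r) rmodule =
  mcarrier :: "'m set"
  madd :: "'m \<Rightarrow> 'm \<Rightarrow> 'm"
  mzero :: 'm
  mact :: "'m \<Rightarrow> 'r \<Rightarrow> 'm"

definition right_module :: "('r, 'c) ring_scheme \<Rightarrow> ('m, 'r, 'd) rmodule_scheme \<Rightarrow> bool" where
  "right_module R M \<longleftrightarrow>
     mzero M \<in> mcarrier M
   \<and> (\<forall>m\<in>mcarrier M. \<forall>n\<in>mcarrier M. madd M m n \<in> mcarrier M)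
   \<and> (\<forall>m\<in>mcarrier M. \<forall>n\<in>mcarrier M. \<forall>k\<in>mcarrier M. madd M (madd M m n) k = madd M m (madd M n k))
   \<and> (\<forall>m\<in>mcarrier M. \<forall>n\<in>mcarrier M. madd M m n = madd M n m)
   \<and> (\<forall>m\<in>mcarrier M. madd M (mzero M) m = m)
   \<and> (\<forall>m\<in>mcarrier M. \<exists>n\<in>mcarrier M. madd M m n = mzero M)
   \<and> (\<forall>m\<in>mcarrier M. \<forall>r\<in>carrier R. mact M m r \<in> mcarrier M)
   \<and> (\<forall>m\<in>mcarrier M. \<forall>n\<in>mcarrier M. \<forall>r\<in>carrier R. mact M (madd M m n) r = madd M (mact M m r) (mact M n r))
   \<and> (\<forall>m\<in>mcarrier M. \<forall>r\<in>carrier R. \<forall>s\<in>carrier R. mact M m (r \<oplus>\<^bsub>R\<^esub> s) = madd M (mact M m r) (mact M m s))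
   \<and> (\<forall>m\<in>mcarrier M. \<forall>r\<in>carrier R. \<forall>s\<in>carrier R. mact M m (r \<otimes>\<^bsub>R\<^esub> s) = mact M (mact M m r) s)
   \<and> (\<forall>m\<in>mcarrier M. mact M m \<one>\<^bsub>R\<^esub> = m)"

definition rmodule_iso :: "('r, 'c) ring_scheme \<Rightarrow> ('m, 'r, 'd) rmodule_scheme \<Rightarrow> ('n, 'r, 'e) rmodule_scheme \<Rightarrow> bool" where
  "rmodule_iso R M N \<longleftrightarrow> (\<exists>f. bij_betw f (mcarrier M) (mcarrier N)
      \<and> (\<forall>m\<in>mcarrier M. \<forall>m'\<in>mcarrier M. f (madd M m m') = madd N (f m) (f m'))
      \<and> (\<forall>m\<in>mcarrier M. \<forall>r\<in>carrier R. f (mact M m r) = mact N (f m) r))"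

inductive_set gen_submodule :: "('r, 'c) ring_scheme \<Rightarrow> ('m, 'r, 'd) rmodule_scheme \<Rightarrow> 'm set \<Rightarrow> 'm set"
  for R :: "('r, 'c) ring_scheme" and M :: "('m, 'r, 'd) rmodule_scheme" and B :: "'m set" where
  base: "b \<in> B \<Longrightarrow> b \<in> gen_submodule R M B"
| zero: "mzero M \<in> gen_submodule R M B"
| add: "m \<in> gen_submodule R M B \<Longrightarrow> n \<in> gen_submodule R M B \<Longrightarrow> madd M m n \<in> gen_submodule R M B"
| act: "m \<in> gen_submodule R M B \<Longrightarrow> r \<in> carrier R \<Longrightarrow> mact M m r \<in> gen_submodule R M B"

definition mcoset :: "('m, 'r, 'd) rmodule_scheme \<Rightarrow> 'm \<Rightarrow> 'm set \<Rightarrow> 'm set" where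
  "mcoset M m N = {madd M m n | n. n \<in> N}"

definition quotient_module :: "('m, 'r, 'd) rmodule_scheme \<Rightarrow> 'm set \<Rightarrow> ('m set, 'r) rmodule" where
  "quotient_module M N = \<lparr>mcarrier = {mcoset M m N | m. m \<in> mcarrier M},
     madd = (\<lambda>C1 C2. {madd M x y | x y. x \<in> C1 \<and> y \<in> C2}),
     mzero = N,
     mact = (\<lambda>C1 r. {z. \<exists>x\<in>C1. z \<in> mcoset M (mact M x r) N})\<rparr>"

text \<open>Free abelian group on M x Q modulo the balanced-bilinearity relations;
  the result is a right Q-module (elements are cosets).\<close>
definition tgen :: "'m \<Rightarrow> 'q \<Rightarrow> ('m \<times> 'q) \<Rightarrow>\<^sub>0 int" where
  "tgen m q = Poly_Mapping.single (m, q) 1"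

definition tensor_gens :: "('r, 'c) ring_scheme \<Rightarrow> ('m, 'r, 'd) rmodule_scheme \<Rightarrow> ('q, 'e) ring_scheme
     \<Rightarrow> ('r \<Rightarrow> 'q) \<Rightarrow> (('m \<times> 'q) \<Rightarrow>\<^sub>0 int) set" where
  "tensor_gens R M Q \<phi> =
     {tgen (madd M m m') q - tgen m q - tgen m' q | m m' q. m \<in> mcarrier M \<and> m' \<in> mcarrier M \<and> q \<in> carrier Q}
   \<union> {tgen m (q \<oplus>\<^bsub>Q\<^esub> q') - tgen m q - tgen m q' | m q q'. m \<in> mcarrier M \<and> q \<in> carrier Q \<and> q' \<in> carrier Q}
   \<union> {tgen (mact M m r) q - tgen m (\<phi> r \<otimes>\<^bsub>Q\<^esub> q) | m r q. m \<in> mcarrier M \<and> r \<in> carrier R \<and> q \<in> carrier Q}"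

inductive_set tensor_rel :: "('r, 'c) ring_scheme \<Rightarrow> ('m, 'r, 'd) rmodule_scheme \<Rightarrow> ('q, 'e) ring_scheme
     \<Rightarrow> ('r \<Rightarrow> 'q) \<Rightarrow> (('m \<times> 'q) \<Rightarrow>\<^sub>0 int) set"
  for R M Q \<phi> where
  gen: "g \<in> tensor_gens R M Q \<phi> \<Longrightarrow> g \<in> tensor_rel R M Q \<phi>"
| zero: "0 \<in> tensor_rel R M Q \<phi>"
| add: "f \<in> tensor_rel R M Q \<phi> \<Longrightarrow> g \<in> tensor_rel R M Q \<phi> \<Longrightarrow> f + g \<in> tensor_rel R M Q \<phi>"
| neg: "f \<in> tensor_rel R M Q \<phi> \<Longrightarrow> - f \<in> tensor_rel R M Q \<phi>"

definition tclass :: "('r, 'c) ring_scheme \<Rightarrow> ('m, 'r, 'd) rmodule_scheme \<Rightarrow> ('q, 'e) ring_scheme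
     \<Rightarrow> ('r \<Rightarrow> 'q) \<Rightarrow> (('m \<times> 'q) \<Rightarrow>\<^sub>0 int) \<Rightarrow> (('m \<times> 'q) \<Rightarrow>\<^sub>0 int) set" where
  "tclass R M Q \<phi> f = {f + g | g. g \<in> tensor_rel R M Q \<phi>}"

definition tact_rep :: "('q, 'e) ring_scheme \<Rightarrow> (('m \<times> 'q) \<Rightarrow>\<^sub>0 int) \<Rightarrow> 'q \<Rightarrow> (('m \<times> 'q) \<Rightarrow>\<^sub>0 int)" where
  "tact_rep Q f q = (\<Sum>p\<in>Poly_Mapping.keys f. Poly_Mapping.single (fst p, snd p \<otimes>\<^bsub>Q\<^esub> q) (Poly_Mapping.lookup f p))"

definition tensor :: "('r, 'c) ring_scheme \<Rightarrow> ('m, 'r, 'd) rmodule_scheme \<Rightarrow> ('q, 'e) ring_scheme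
     \<Rightarrow> ('r \<Rightarrow> 'q) \<Rightarrow> ((('m \<times> 'q) \<Rightarrow>\<^sub>0 int) set, 'q) rmodule" where
  "tensor R M Q \<phi> = \<lparr>
     mcarrier = {tclass R M Q \<phi> f | f. Poly_Mapping.keys f \<subseteq> mcarrier M \<times> carrier Q},
     madd = (\<lambda>C1 C2. {f + g | f g. f \<in> C1 \<and> g \<in> C2}),
     mzero = tensor_rel R M Q \<phi>,
     mact = (\<lambda>C1 q. {h. \<exists>f\<in>C1. h \<in> tclass R M Q \<phi> (tact_rep Q f q)})\<rparr>"

definition right_ring_of_fractions :: "('r, 'c) ring_scheme \<Rightarrow> 'r set \<Rightarrow> ('q, 'e) ring_scheme \<Rightarrow> ('r \<Rightarrow> 'q) \<Rightarrow> bool" where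
  "right_ring_of_fractions R T Q \<phi> \<longleftrightarrow>
     ring Q \<and> \<phi> \<in> ring_hom R Q
   \<and> (\<forall>t\<in>T. \<phi> t \<in> Units Q)
   \<and> (\<forall>q\<in>carrier Q. \<exists>r\<in>carrier R. \<exists>t\<in>T. q = \<phi> r \<otimes>\<^bsub>Q\<^esub> inv\<^bsub>Q\<^esub> (\<phi> t))
   \<and> (\<forall>r\<in>carrier R. \<phi> r = \<zero>\<^bsub>Q\<^esub> \<longleftrightarrow> (\<exists>t\<in>T. r \<otimes>\<^bsub>R\<^esub> t = \<zero>\<^bsub>R\<^esub>))"

primrec cprod :: "('a, 'b) ring_scheme \<Rightarrow> ('a \<Rightarrow> 'a) \<Rightarrow> 'a \<Rightarrow> nat \<Rightarrow> 'a" where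
  "cprod A \<sigma> a 0 = a"
| "cprod A \<sigma> a (Suc l) = cprod A \<sigma> a l \<otimes>\<^bsub>A\<^esub> sigma_pow A \<sigma> (- int (Suc l)) a"

definition Vlev :: "('a, 'b) ring_scheme \<Rightarrow> ('a \<Rightarrow> 'a) \<Rightarrow> 'a \<Rightarrow> ('m, 'a fword set, 'd) rmodule_scheme \<Rightarrow> nat \<Rightarrow> 'm set" where
  "Vlev A \<sigma> a V l = {v \<in> mcarrier V. mact V v (gwa_incl A \<sigma> a (cprod A \<sigma> a l)) = mzero V}"

definition Vinf :: "('a, 'b) ring_scheme \<Rightarrow> ('a \<Rightarrow> 'a) \<Rightarrow> 'a \<Rightarrow> ('m, 'a fword set, 'd) rmodule_scheme \<Rightarrow> 'm set" where
  "Vinf A \<sigma> a V = (\<Union>l. Vlev A \<sigma> a V l)"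

definition height :: "('a, 'b) ring_scheme \<Rightarrow> ('a \<Rightarrow> 'a) \<Rightarrow> 'a \<Rightarrow> ('m, 'a fword set, 'd) rmodule_scheme \<Rightarrow> enat" where
  "height A \<sigma> a V = (if \<exists>l. Vlev A \<sigma> a V l = Vinf A \<sigma> a V
      then enat (LEAST l. Vlev A \<sigma> a V l = Vinf A \<sigma> a V) else \<infinity>)"

definition Vlev_e :: "('a, 'b) ring_scheme \<Rightarrow> ('a \<Rightarrow> 'a) \<Rightarrow> 'a \<Rightarrow> ('m, 'a fword set, 'd) rmodule_scheme \<Rightarrow> enat \<Rightarrow> 'm set" where
  "Vlev_e A \<sigma> a V h = (case h of enat l \<Rightarrow> Vlev A \<sigma> a V l | \<infinity> \<Rightarrow> Vinf A \<sigma> a V)"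

end

theory Submission
  imports Defs
begin

lemma frag_cmul_of: "frag_cmul c (frag_of x) = Poly_Mapping.single x c"
  by (rule poly_mapping_eqI) (simp add: lookup_single when_def)

lemma tact_rep_fe: "tact_rep Q f q = frag_extend (\<lambda>p. frag_of (fst p, snd p \<otimes>\<^bsub>Q\<^esub> q)) f"
  unfolding tact_rep_def frag_extend_def by (simp add: frag_cmul_of)

lemma rel_diff: "f \<in> tensor_rel R M Q \<phi> \<Longrightarrow> g \<in> tensor_rel R M Q \<phi> \<Longrightarrow> f - g \<in> tensor_rel R M Q \<phi>"
  by (metis tensor_rel.add tensor_rel.neg diff_conv_add_uminus)

lemma rel_fe:
  assumes "\<And>x. x \<in> Poly_Mapping.keys c \<Longrightarrow> b x \<in> tensor_rel R M Q \<phi>"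
  shows "frag_extend b c \<in> tensor_rel R M Q \<phi>"
proof -
  have "Poly_Mapping.keys c \<subseteq> Poly_Mapping.keys c" by simp
  then show ?thesis
  proof (induction c rule: frag_induction)
    case zero then show ?case by (simp add: tensor_rel.zero)
  next
    case (one x) then show ?case using assms by simp
  next
    case (diff a b) then show ?case by (simp add: frag_extend_diff rel_diff)
  qed
qed

lemma tclass_eq_iff: "tclass R M Q \<phi> f = tclass R M Q \<phi> g \<longleftrightarrow> f - g \<in> tensor_rel R M Q \<phi>"
proof
  assume "tclass R M Q \<phi> f = tclass R M Q \<phi> g"
  moreover have "f \<in> tclass R M Q \<phi> f" unfolding tclass_def using tensor_rel.zero by force
  ultimately obtain r where "f = g + r" "r \<in> tensor_rel R M Q \<phi>" unfolding tclass_def by auto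
  then show "f - g \<in> tensor_rel R M Q \<phi>" by simp
next
  assume h: "f - g \<in> tensor_rel R M Q \<phi>"
  have h2: "g - f \<in> tensor_rel R M Q \<phi>" using tensor_rel.neg[OF h] by simp
  show "tclass R M Q \<phi> f = tclass R M Q \<phi> g"
  proof (intro Set.set_eqI)
    fix x
    show "x \<in> tclass R M Q \<phi> f \<longleftrightarrow> x \<in> tclass R M Q \<phi> g"
    proof
      assume "x \<in> tclass R M Q \<phi> f"
      then obtain r where "x = f + r" "r \<in> tensor_rel R M Q \<phi>" unfolding tclass_def by auto
      then have "x = g + ((f - g) + r)" by simp
      then show "x \<in> tclass R M Q \<phi> g" unfolding tclass_def
        using tensor_rel.add[OF h \<open>r \<in> _\<close>] by blast
    next
      assume "x \<in> tclass R M Q \<phi> g"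
      then obtain r where "x = g + r" "r \<in> tensor_rel R M Q \<phi>" unfolding tclass_def by auto
      then have "x = f + ((g - f) + r)" by simp
      then show "x \<in> tclass R M Q \<phi> f" unfolding tclass_def
        using tensor_rel.add[OF h2 \<open>r \<in> _\<close>] by blast
    qed
  qed
qed

lemma ext_class:
  assumes K: "\<And>r. r \<in> tensor_rel R M Q \<phi> \<Longrightarrow> K r \<in> tensor_rel R M' Q \<phi>"
    and Kadd: "\<And>f g. K (f + g) = K f + K g"
  shows "{h. \<exists>f\<in>tclass R M Q \<phi> f0. h \<in> tclass R M' Q \<phi> (K f)} = tclass R M' Q \<phi> (K f0)"
proof -
  have "tclass R M' Q \<phi> (K f) = tclass R M' Q \<phi> (K f0)" if hf: "f \<in> tclass R M Q \<phi> f0" for f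
  proof -
    obtain r where "f = f0 + r" "r \<in> tensor_rel R M Q \<phi>" using hf unfolding tclass_def by blast
    then have "K f - K f0 = K r" using Kadd by simp
    then show ?thesis using K[OF \<open>r \<in> _\<close>] tclass_eq_iff by metis
  qed
  moreover have "f0 \<in> tclass R M Q \<phi> f0" unfolding tclass_def using tensor_rel.zero by force
  ultimately show ?thesis by blast
qed

lemma madd_class: "madd (tensor R M Q \<phi>) (tclass R M Q \<phi> f) (tclass R M Q \<phi> g) = tclass R M Q \<phi> (f + g)"
proof -
  have "{x + y |x y. x \<in> tclass R M Q \<phi> f \<and> y \<in> tclass R M Q \<phi> g} = tclass R M Q \<phi> (f + g)"
  proof (intro Set.set_eqI iffI)
    fix z assume "z \<in> {x + y |x y. x \<in> tclass R M Q \<phi> f \<and> y \<in> tclass R M Q \<phi> g}"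
    then obtain r s where "z = (f + r) + (g + s)" "r \<in> tensor_rel R M Q \<phi>" "s \<in> tensor_rel R M Q \<phi>"
      unfolding tclass_def by auto
    then have "z = (f + g) + (r + s)" "r + s \<in> tensor_rel R M Q \<phi>"
      by (simp_all add: algebra_simps tensor_rel.add)
    then show "z \<in> tclass R M Q \<phi> (f + g)" unfolding tclass_def by blast
  next
    fix z assume "z \<in> tclass R M Q \<phi> (f + g)"
    then obtain r where "z = (f + r) + (g + 0)" "r \<in> tensor_rel R M Q \<phi>" unfolding tclass_def
      by (auto simp: algebra_simps)
    then show "z \<in> {x + y |x y. x \<in> tclass R M Q \<phi> f \<and> y \<in> tclass R M Q \<phi> g}"
      unfolding tclass_def using tensor_rel.zero by blast
  qed
  then show ?thesis unfolding tensor_def by simp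
qed

lemma fe_rel:
  assumes "\<And>g. g \<in> tensor_gens R M Q \<phi> \<Longrightarrow> frag_extend b g \<in> tensor_rel R M' Q \<phi>"
  shows "r \<in> tensor_rel R M Q \<phi> \<Longrightarrow> frag_extend b r \<in> tensor_rel R M' Q \<phi>"
proof (induction r rule: tensor_rel.induct)
  case (gen g) then show ?case using assms by blast
next
  case zero then show ?case by (simp add: tensor_rel.zero)
next
  case (add f g) then show ?case by (simp add: frag_extend_add tensor_rel.add)
next
  case (neg f) then show ?case by (simp add: frag_extend_minus tensor_rel.neg)
qed

lemma tact_gens:
  assumes Q: "ring Q" and phi: "\<phi> \<in> carrier R \<rightarrow> carrier Q" and q: "q \<in> carrier Q"
    and g: "g \<in> tensor_gens R M Q \<phi>"
  shows "frag_extend (\<lambda>p. frag_of (fst p, snd p \<otimes>\<^bsub>Q\<^esub> q)) g \<in> tensor_rel R M Q \<phi>"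
proof -
  interpret ring Q by (rule Q)
  from g show ?thesis
    unfolding tensor_gens_def
  proof (elim UnE CollectE exE conjE)
    fix m m' q0 assume *: "g = tgen (madd M m m') q0 - tgen m q0 - tgen m' q0"
      "m \<in> mcarrier M" "m' \<in> mcarrier M" "q0 \<in> carrier Q"
    then have eq: "frag_extend (\<lambda>p. frag_of (fst p, snd p \<otimes>\<^bsub>Q\<^esub> q)) g
       = tgen (madd M m m') (q0 \<otimes>\<^bsub>Q\<^esub> q) - tgen m (q0 \<otimes>\<^bsub>Q\<^esub> q) - tgen m' (q0 \<otimes>\<^bsub>Q\<^esub> q)"
      by (simp add: tgen_def frag_extend_diff)
    moreover have "q0 \<otimes>\<^bsub>Q\<^esub> q \<in> carrier Q" using * q by simp
    ultimately have "frag_extend (\<lambda>p. frag_of (fst p, snd p \<otimes>\<^bsub>Q\<^esub> q)) g \<in> tensor_gens R M Q \<phi>"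
      unfolding eq tensor_gens_def
      by (intro UnI1 CollectI exI[of _ m] exI[of _ m'] exI[of _ "q0 \<otimes>\<^bsub>Q\<^esub> q"]) (simp add: *)
    then show ?thesis by (rule tensor_rel.gen)
  next
    fix m q0 q1 assume *: "g = tgen m (q0 \<oplus>\<^bsub>Q\<^esub> q1) - tgen m q0 - tgen m q1"
      "m \<in> mcarrier M" "q0 \<in> carrier Q" "q1 \<in> carrier Q"
    then have eq: "frag_extend (\<lambda>p. frag_of (fst p, snd p \<otimes>\<^bsub>Q\<^esub> q)) g
       = tgen m (q0 \<otimes>\<^bsub>Q\<^esub> q \<oplus>\<^bsub>Q\<^esub> q1 \<otimes>\<^bsub>Q\<^esub> q) - tgen m (q0 \<otimes>\<^bsub>Q\<^esub> q) - tgen m (q1 \<otimes>\<^bsub>Q\<^esub> q)"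
      using q by (simp add: tgen_def frag_extend_diff l_distr)
    moreover have "q0 \<otimes>\<^bsub>Q\<^esub> q \<in> carrier Q" "q1 \<otimes>\<^bsub>Q\<^esub> q \<in> carrier Q" using * q by auto
    ultimately have "frag_extend (\<lambda>p. frag_of (fst p, snd p \<otimes>\<^bsub>Q\<^esub> q)) g \<in> tensor_gens R M Q \<phi>"
      unfolding eq tensor_gens_def
      by (intro UnI1 UnI2 CollectI exI[of _ m] exI[of _ "q0 \<otimes>\<^bsub>Q\<^esub> q"] exI[of _ "q1 \<otimes>\<^bsub>Q\<^esub> q"]) (simp add: *)
    then show ?thesis by (rule tensor_rel.gen)
  next
    fix m r q0 assume *: "g = tgen (mact M m r) q0 - tgen m (\<phi> r \<otimes>\<^bsub>Q\<^esub> q0)"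
      "m \<in> mcarrier M" "r \<in> carrier R" "q0 \<in> carrier Q"
    have pr: "\<phi> r \<in> carrier Q" using phi * by auto
    from * have eq: "frag_extend (\<lambda>p. frag_of (fst p, snd p \<otimes>\<^bsub>Q\<^esub> q)) g
       = tgen (mact M m r) (q0 \<otimes>\<^bsub>Q\<^esub> q) - tgen m (\<phi> r \<otimes>\<^bsub>Q\<^esub> (q0 \<otimes>\<^bsub>Q\<^esub> q))"
      using q pr by (simp add: tgen_def frag_extend_diff m_assoc)
    moreover have "q0 \<otimes>\<^bsub>Q\<^esub> q \<in> carrier Q" using * q by auto
    ultimately have "frag_extend (\<lambda>p. frag_of (fst p, snd p \<otimes>\<^bsub>Q\<^esub> q)) g \<in> tensor_gens R M Q \<phi>"
      unfolding eq tensor_gens_def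
      by (intro UnI2 CollectI exI[of _ m] exI[of _ r] exI[of _ "q0 \<otimes>\<^bsub>Q\<^esub> q"]) (simp add: *)
    then show ?thesis by (rule tensor_rel.gen)
  qed
qed

lemma tact_rel:
  assumes "ring Q" "\<phi> \<in> carrier R \<rightarrow> carrier Q" "q \<in> carrier Q" "r \<in> tensor_rel R M Q \<phi>"
  shows "frag_extend (\<lambda>p. frag_of (fst p, snd p \<otimes>\<^bsub>Q\<^esub> q)) r \<in> tensor_rel R M Q \<phi>"
  by (rule fe_rel[OF tact_gens[OF assms(1-3)] assms(4)])

lemma mact_class:
  assumes "ring Q" "\<phi> \<in> carrier R \<rightarrow> carrier Q" "q \<in> carrier Q"
  shows "mact (tensor R M Q \<phi>) (tclass R M Q \<phi> f) q
     = tclass R M Q \<phi> (frag_extend (\<lambda>p. frag_of (fst p, snd p \<otimes>\<^bsub>Q\<^esub> q)) f)"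
  unfolding tensor_def tact_rep_fe
  by (simp add: ext_class[OF tact_rel[OF assms] frag_extend_add])


lemma carrierT: "mcarrier (tensor R M Q \<phi>) = {tclass R M Q \<phi> f | f. Poly_Mapping.keys f \<subseteq> mcarrier M \<times> carrier Q}"
  unfolding tensor_def by simp

lemma keys_of_fe:
  assumes "Poly_Mapping.keys f \<subseteq> XX" "\<And>p. p \<in> XX \<Longrightarrow> k p \<in> YY"
  shows "Poly_Mapping.keys (frag_extend (\<lambda>p. frag_of (k p)) f) \<subseteq> YY"
  using keys_frag_extend[of "\<lambda>p. frag_of (k p)" f] assms by (auto simp: keys_frag_of)


lemma fe_diff_fun: "frag_extend (\<lambda>x. b x - c x) d = frag_extend b d - frag_extend c d"
  using subset_UNIV
  by (induction d rule: frag_induction) (auto simp: frag_extend_diff)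


locale qs =
  fixes R :: "('r,'c) ring_scheme" and V :: "('m,'r,'d) rmodule_scheme"
    and Q :: "('q,'e) ring_scheme" and \<phi> :: "'r \<Rightarrow> 'q" and N :: "'m set"
  assumes modV: "right_module R V" and ringQ: "ring Q" and phi: "\<phi> \<in> carrier R \<rightarrow> carrier Q"
    and Nsub: "N \<subseteq> mcarrier V" and N0: "mzero V \<in> N"
    and Nadd: "\<And>m n. m \<in> N \<Longrightarrow> n \<in> N \<Longrightarrow> madd V m n \<in> N"
    and Nact: "\<And>m r. m \<in> N \<Longrightarrow> r \<in> carrier R \<Longrightarrow> mact V m r \<in> N"
    and Nkill: "\<And>n q. n \<in> N \<Longrightarrow> q \<in> carrier Q \<Longrightarrow> tgen n q \<in> tensor_rel R V Q \<phi>"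
begin

lemma zc: "mzero V \<in> mcarrier V" using modV unfolding right_module_def by blast
lemma ac: "m \<in> mcarrier V \<Longrightarrow> n \<in> mcarrier V \<Longrightarrow> madd V m n \<in> mcarrier V"
  using modV unfolding right_module_def by auto
lemma assoc: "m \<in> mcarrier V \<Longrightarrow> n \<in> mcarrier V \<Longrightarrow> k \<in> mcarrier V \<Longrightarrow>
   madd V (madd V m n) k = madd V m (madd V n k)"
  using modV unfolding right_module_def by blast
lemma comm: "m \<in> mcarrier V \<Longrightarrow> n \<in> mcarrier V \<Longrightarrow> madd V m n = madd V n m"
  using modV unfolding right_module_def by blast
lemma lcomm: "m \<in> mcarrier V \<Longrightarrow> n \<in> mcarrier V \<Longrightarrow> k \<in> mcarrier V \<Longrightarrow>
   madd V m (madd V n k) = madd V n (madd V m k)"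
  by (metis assoc comm)
lemma zl: "m \<in> mcarrier V \<Longrightarrow> madd V (mzero V) m = m"
  using modV unfolding right_module_def by blast
lemma zr: "m \<in> mcarrier V \<Longrightarrow> madd V m (mzero V) = m"
  using zl comm zc by metis
lemma actc: "m \<in> mcarrier V \<Longrightarrow> r \<in> carrier R \<Longrightarrow> mact V m r \<in> mcarrier V"
  using modV unfolding right_module_def by blast
lemma actd: "m \<in> mcarrier V \<Longrightarrow> n \<in> mcarrier V \<Longrightarrow> r \<in> carrier R \<Longrightarrow>
   mact V (madd V m n) r = madd V (mact V m r) (mact V n r)"
  using modV unfolding right_module_def by blast

lemma Nc: "n \<in> N \<Longrightarrow> n \<in> mcarrier V" using Nsub by blast

abbreviation P where "P \<equiv> quotient_module V N"
abbreviation pi where "pi m \<equiv> mcoset V m N"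

definition rep where "rep C = (SOME m. m \<in> mcarrier V \<and> C = pi m)"

lemma mem_pi: "m \<in> mcarrier V \<Longrightarrow> m \<in> pi m"
  unfolding mcoset_def using zr N0 by force

lemma pi_add: assumes "m \<in> mcarrier V" "m' \<in> mcarrier V"
  shows "madd P (pi m) (pi m') = pi (madd V m m')"
proof -
  have "{madd V x y |x y. x \<in> pi m \<and> y \<in> pi m'} = pi (madd V m m')"
  proof (intro Set.set_eqI iffI)
    fix z assume "z \<in> {madd V x y |x y. x \<in> pi m \<and> y \<in> pi m'}"
    then obtain n n' where nn: "n \<in> N" "n' \<in> N" "z = madd V (madd V m n) (madd V m' n')"
      unfolding mcoset_def by blast
    then have "z = madd V (madd V m m') (madd V n n')"
      using assms Nc[OF nn(1)] Nc[OF nn(2)] by (simp add: assoc lcomm ac)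
    then show "z \<in> pi (madd V m m')" unfolding mcoset_def using Nadd nn by blast
  next
    fix z assume "z \<in> pi (madd V m m')"
    then obtain n where nn: "n \<in> N" "z = madd V (madd V m m') n" unfolding mcoset_def by blast
    then have "z = madd V (madd V m n) (madd V m' (mzero V))"
      using assms Nc[OF nn(1)] by (simp add: assoc ac zr comm[of n m'])
    then show "z \<in> {madd V x y |x y. x \<in> pi m \<and> y \<in> pi m'}"
      unfolding mcoset_def using nn N0 by blast
  qed
  then show ?thesis unfolding quotient_module_def by simp
qed

lemma pi_act: assumes "m \<in> mcarrier V" "r \<in> carrier R"
  shows "mact P (pi m) r = pi (mact V m r)"
proof -
  have "{z. \<exists>x\<in>pi m. z \<in> pi (mact V x r)} = pi (mact V m r)"
  proof (intro Set.set_eqI iffI)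
    fix z assume "z \<in> {z. \<exists>x\<in>pi m. z \<in> pi (mact V x r)}"
    then obtain n n' where nn: "n \<in> N" "n' \<in> N" "z = madd V (mact V (madd V m n) r) n'"
      unfolding mcoset_def by blast
    then have "z = madd V (mact V m r) (madd V (mact V n r) n')"
      using assms Nc[OF nn(1)] Nc[OF nn(2)] by (simp add: actd assoc actc)
    then show "z \<in> pi (mact V m r)" unfolding mcoset_def using Nadd Nact nn assms by blast
  next
    fix z assume "z \<in> pi (mact V m r)"
    then show "z \<in> {z. \<exists>x\<in>pi m. z \<in> pi (mact V x r)}" using mem_pi assms by blast
  qed
  then show ?thesis unfolding quotient_module_def by simp
qed

lemma carrierP: "mcarrier P = pi ` mcarrier V"
  unfolding quotient_module_def by auto

lemma rep: assumes "C \<in> mcarrier P" shows "rep C \<in> mcarrier V" "pi (rep C) = C"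
proof -
  have "\<exists>m. m \<in> mcarrier V \<and> C = pi m" using assms carrierP by blast
  then have "rep C \<in> mcarrier V \<and> C = pi (rep C)" unfolding rep_def by (rule someI_ex)
  then show "rep C \<in> mcarrier V" "pi (rep C) = C" by auto
qed

lemma tgen0: "q \<in> carrier Q \<Longrightarrow> tgen (mzero V) q \<in> tensor_rel R V Q \<phi>"
  using Nkill N0 by blast

lemma gen1: "m \<in> mcarrier V \<Longrightarrow> m' \<in> mcarrier V \<Longrightarrow> q \<in> carrier Q \<Longrightarrow>
   tgen (madd V m m') q - tgen m q - tgen m' q \<in> tensor_rel R V Q \<phi>"
  by (rule tensor_rel.gen) (unfold tensor_gens_def, blast)

lemma gen3: "m \<in> mcarrier V \<Longrightarrow> r \<in> carrier R \<Longrightarrow> q \<in> carrier Q \<Longrightarrow>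
   tgen (mact V m r) q - tgen m (\<phi> r \<otimes>\<^bsub>Q\<^esub> q) \<in> tensor_rel R V Q \<phi>"
  by (rule tensor_rel.gen) (unfold tensor_gens_def, blast)

lemma pi_eq_rel: assumes "m \<in> mcarrier V" "m' \<in> mcarrier V" "pi m = pi m'" "q \<in> carrier Q"
  shows "tgen m q - tgen m' q \<in> tensor_rel R V Q \<phi>"
proof -
  have "m \<in> pi m'" using mem_pi assms by metis
  then obtain n where n: "n \<in> N" "m = madd V m' n" unfolding mcoset_def by blast
  have "tgen m q - tgen m' q = (tgen (madd V m' n) q - tgen m' q - tgen n q) + tgen n q"
    using n by simp
  then show ?thesis using tensor_rel.add[OF gen1[OF assms(2) Nc[OF n(1)] assms(4)] Nkill[OF n(1) assms(4)]]
    by simp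
qed

lemma rep_pi_rel: "m \<in> mcarrier V \<Longrightarrow> q \<in> carrier Q \<Longrightarrow> tgen (rep (pi m)) q - tgen m q \<in> tensor_rel R V Q \<phi>"
  using rep[of "pi m"] carrierP pi_eq_rel by blast


definition Gk where "Gk p = frag_of (pi (fst p), snd p)"
definition Sk where "Sk p = frag_of (rep (fst p), snd p)"

lemma piP: "m \<in> mcarrier V \<Longrightarrow> pi m \<in> mcarrier P" using carrierP by blast

lemma G_gens: assumes g: "g \<in> tensor_gens R V Q \<phi>"
  shows "frag_extend Gk g \<in> tensor_rel R P Q \<phi>"
  using g unfolding tensor_gens_def
proof (elim UnE CollectE exE conjE)
  fix m m' q0 assume *: "g = tgen (madd V m m') q0 - tgen m q0 - tgen m' q0"
    "m \<in> mcarrier V" "m' \<in> mcarrier V" "q0 \<in> carrier Q"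
  then have eq: "frag_extend Gk g = tgen (madd P (pi m) (pi m')) q0 - tgen (pi m) q0 - tgen (pi m') q0"
    by (simp add: tgen_def frag_extend_diff Gk_def pi_add)
  have "frag_extend Gk g \<in> tensor_gens R P Q \<phi>"
    unfolding eq tensor_gens_def
    by (intro UnI1 CollectI exI[of _ "pi m"] exI[of _ "pi m'"] exI[of _ q0]) (simp add: * piP)
  then show ?thesis by (rule tensor_rel.gen)
next
  fix m q0 q1 assume *: "g = tgen m (q0 \<oplus>\<^bsub>Q\<^esub> q1) - tgen m q0 - tgen m q1"
    "m \<in> mcarrier V" "q0 \<in> carrier Q" "q1 \<in> carrier Q"
  then have eq: "frag_extend Gk g = tgen (pi m) (q0 \<oplus>\<^bsub>Q\<^esub> q1) - tgen (pi m) q0 - tgen (pi m) q1"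
    by (simp add: tgen_def frag_extend_diff Gk_def)
  have "frag_extend Gk g \<in> tensor_gens R P Q \<phi>"
    unfolding eq tensor_gens_def
    by (intro UnI1 UnI2 CollectI exI[of _ "pi m"] exI[of _ q0] exI[of _ q1]) (simp add: * piP)
  then show ?thesis by (rule tensor_rel.gen)
next
  fix m r q0 assume *: "g = tgen (mact V m r) q0 - tgen m (\<phi> r \<otimes>\<^bsub>Q\<^esub> q0)"
    "m \<in> mcarrier V" "r \<in> carrier R" "q0 \<in> carrier Q"
  then have eq: "frag_extend Gk g = tgen (mact P (pi m) r) q0 - tgen (pi m) (\<phi> r \<otimes>\<^bsub>Q\<^esub> q0)"
    by (simp add: tgen_def frag_extend_diff Gk_def pi_act)
  have "frag_extend Gk g \<in> tensor_gens R P Q \<phi>"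
    unfolding eq tensor_gens_def
    by (intro UnI2 CollectI exI[of _ "pi m"] exI[of _ r] exI[of _ q0]) (simp add: * piP)
  then show ?thesis by (rule tensor_rel.gen)
qed

lemma S_gens: assumes g: "g \<in> tensor_gens R P Q \<phi>"
  shows "frag_extend Sk g \<in> tensor_rel R V Q \<phi>"
  using g unfolding tensor_gens_def
proof (elim UnE CollectE exE conjE)
  fix C C' q0 assume *: "g = tgen (madd P C C') q0 - tgen C q0 - tgen C' q0"
    "C \<in> mcarrier P" "C' \<in> mcarrier P" "q0 \<in> carrier Q"
  define m where "m = rep C"
  define m' where "m' = rep C'"
  have mc: "m \<in> mcarrier V" "m' \<in> mcarrier V" using rep * unfolding m_def m'_def by auto
  have "madd P C C' = pi (madd V m m')" using pi_add[OF mc] rep * unfolding m_def m'_def by metis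
  then have eq: "frag_extend Sk g = (tgen (rep (pi (madd V m m'))) q0 - tgen (madd V m m') q0)
      + (tgen (madd V m m') q0 - tgen m q0 - tgen m' q0)"
    using * by (simp add: tgen_def frag_extend_diff Sk_def m_def m'_def)
  show ?thesis unfolding eq
    by (rule tensor_rel.add[OF rep_pi_rel gen1]) (use mc * ac in auto)
next
  fix C q0 q1 assume *: "g = tgen C (q0 \<oplus>\<^bsub>Q\<^esub> q1) - tgen C q0 - tgen C q1"
    "C \<in> mcarrier P" "q0 \<in> carrier Q" "q1 \<in> carrier Q"
  then have eq: "frag_extend Sk g = tgen (rep C) (q0 \<oplus>\<^bsub>Q\<^esub> q1) - tgen (rep C) q0 - tgen (rep C) q1"
    by (simp add: tgen_def frag_extend_diff Sk_def)
  have "frag_extend Sk g \<in> tensor_gens R V Q \<phi>"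
    unfolding eq tensor_gens_def
    by (intro UnI1 UnI2 CollectI exI[of _ "rep C"] exI[of _ q0] exI[of _ q1]) (simp add: * rep)
  then show ?thesis by (rule tensor_rel.gen)
next
  fix C r q0 assume *: "g = tgen (mact P C r) q0 - tgen C (\<phi> r \<otimes>\<^bsub>Q\<^esub> q0)"
    "C \<in> mcarrier P" "r \<in> carrier R" "q0 \<in> carrier Q"
  define m where "m = rep C"
  have mc: "m \<in> mcarrier V" using rep * unfolding m_def by auto
  have "mact P C r = pi (mact V m r)" using pi_act[OF mc *(3)] rep * unfolding m_def by metis
  then have eq: "frag_extend Sk g = (tgen (rep (pi (mact V m r))) q0 - tgen (mact V m r) q0)
      + (tgen (mact V m r) q0 - tgen m (\<phi> r \<otimes>\<^bsub>Q\<^esub> q0))"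
    using * by (simp add: tgen_def frag_extend_diff Sk_def m_def)
  show ?thesis unfolding eq
    by (rule tensor_rel.add[OF rep_pi_rel gen3]) (use mc * actc in auto)
qed

lemma G_rel: "r \<in> tensor_rel R V Q \<phi> \<Longrightarrow> frag_extend Gk r \<in> tensor_rel R P Q \<phi>"
  by (rule fe_rel[OF G_gens])

lemma S_rel: "r \<in> tensor_rel R P Q \<phi> \<Longrightarrow> frag_extend Sk r \<in> tensor_rel R V Q \<phi>"
  by (rule fe_rel[OF S_gens])

lemma keysG: "Poly_Mapping.keys f \<subseteq> mcarrier V \<times> carrier Q \<Longrightarrow>
    Poly_Mapping.keys (frag_extend Gk f) \<subseteq> mcarrier P \<times> carrier Q"
  unfolding Gk_def by (rule keys_of_fe) (auto simp: piP)

lemma keysS: "Poly_Mapping.keys f \<subseteq> mcarrier P \<times> carrier Q \<Longrightarrow>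
    Poly_Mapping.keys (frag_extend Sk f) \<subseteq> mcarrier V \<times> carrier Q"
  unfolding Sk_def by (rule keys_of_fe) (auto simp: rep)

lemma Gk_o: "Gk = frag_of o (\<lambda>p. (pi (fst p), snd p))" by (simp add: fun_eq_iff Gk_def)
lemma Sk_o: "Sk = frag_of o (\<lambda>p. (rep (fst p), snd p))" by (simp add: fun_eq_iff Sk_def)

lemma GS: assumes "Poly_Mapping.keys f \<subseteq> mcarrier P \<times> carrier Q"
  shows "frag_extend Gk (frag_extend Sk f) = f"
proof -
  have "frag_extend Gk (frag_extend Sk f) = frag_extend (Gk o (\<lambda>p. (rep (fst p), snd p))) f"
    unfolding Sk_o by (rule frag_extend_compose)
  also have "\<dots> = frag_extend frag_of f"
    by (rule frag_extend_eq) (use assms rep in \<open>auto simp: Gk_def\<close>)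
  finally show ?thesis using frag_expansion by metis
qed

lemma SG: assumes "Poly_Mapping.keys d \<subseteq> mcarrier V \<times> carrier Q"
  shows "frag_extend Sk (frag_extend Gk d) - d \<in> tensor_rel R V Q \<phi>"
proof -
  have "frag_extend Sk (frag_extend Gk d) = frag_extend (Sk o (\<lambda>p. (pi (fst p), snd p))) d"
    unfolding Gk_o by (rule frag_extend_compose)
  then have "frag_extend Sk (frag_extend Gk d) - d
     = frag_extend (\<lambda>p. (Sk o (\<lambda>p. (pi (fst p), snd p))) p - frag_of p) d"
    using frag_expansion[of d] fe_diff_fun by metis
  also have "\<dots> \<in> tensor_rel R V Q \<phi>"
  proof (rule rel_fe)
    fix p assume "p \<in> Poly_Mapping.keys d"
    then obtain m q where p: "p = (m, q)" "m \<in> mcarrier V" "q \<in> carrier Q" using assms by auto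
    show "(Sk o (\<lambda>p. (pi (fst p), snd p))) p - frag_of p \<in> tensor_rel R V Q \<phi>"
      using rep_pi_rel[OF p(2,3)] p by (simp add: Sk_def tgen_def)
  qed
  finally show ?thesis .
qed

definition Phi where "Phi C = {h. \<exists>f\<in>C. h \<in> tclass R P Q \<phi> (frag_extend Gk f)}"

lemma Phi_class: "Phi (tclass R V Q \<phi> f) = tclass R P Q \<phi> (frag_extend Gk f)"
  unfolding Phi_def by (rule ext_class[OF G_rel frag_extend_add])


theorem iso: "rmodule_iso Q (tensor R V Q \<phi>) (tensor R P Q \<phi>)"
  unfolding rmodule_iso_def
proof (intro exI conjI ballI)
  show "bij_betw Phi (mcarrier (tensor R V Q \<phi>)) (mcarrier (tensor R P Q \<phi>))"
    unfolding bij_betw_def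
  proof
    show "inj_on Phi (mcarrier (tensor R V Q \<phi>))"
    proof (rule inj_onI)
      fix C1 C2 assume c1: "C1 \<in> mcarrier (tensor R V Q \<phi>)" and c2: "C2 \<in> mcarrier (tensor R V Q \<phi>)"
        and eq: "Phi C1 = Phi C2"
      obtain f1 where f1: "C1 = tclass R V Q \<phi> f1" "Poly_Mapping.keys f1 \<subseteq> mcarrier V \<times> carrier Q"
        using c1 unfolding carrierT by blast
      obtain f2 where f2: "C2 = tclass R V Q \<phi> f2" "Poly_Mapping.keys f2 \<subseteq> mcarrier V \<times> carrier Q"
        using c2 unfolding carrierT by blast
      define d where "d = f1 - f2"
      have kd: "Poly_Mapping.keys d \<subseteq> mcarrier V \<times> carrier Q"
        unfolding d_def using keys_diff[of f1 f2] f1 f2 by blast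
      have "frag_extend Gk f1 - frag_extend Gk f2 \<in> tensor_rel R P Q \<phi>"
        using eq unfolding f1 f2 Phi_class tclass_eq_iff .
      then have "frag_extend Gk d \<in> tensor_rel R P Q \<phi>" unfolding d_def by (simp add: frag_extend_diff)
      then have "frag_extend Sk (frag_extend Gk d) \<in> tensor_rel R V Q \<phi>" by (rule S_rel)
      then have "frag_extend Sk (frag_extend Gk d) - (frag_extend Sk (frag_extend Gk d) - d) \<in> tensor_rel R V Q \<phi>"
        using SG[OF kd] by (rule rel_diff)
      then have "f1 - f2 \<in> tensor_rel R V Q \<phi>" unfolding d_def by simp
      then show "C1 = C2" unfolding f1 f2 tclass_eq_iff .
    qed
  next
    show "Phi ` mcarrier (tensor R V Q \<phi>) = mcarrier (tensor R P Q \<phi>)"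
    proof (intro Set.set_eqI iffI)
      fix D assume "D \<in> Phi ` mcarrier (tensor R V Q \<phi>)"
      then obtain C where C: "C \<in> mcarrier (tensor R V Q \<phi>)" "D = Phi C" by (rule imageE) simp
      from C(1) obtain f where "C = tclass R V Q \<phi> f" "Poly_Mapping.keys f \<subseteq> mcarrier V \<times> carrier Q"
        unfolding carrierT by blast
      then have "D = Phi (tclass R V Q \<phi> f)" "Poly_Mapping.keys f \<subseteq> mcarrier V \<times> carrier Q"
        using C(2) by simp_all
      then show "D \<in> mcarrier (tensor R P Q \<phi>)" unfolding carrierT[of R P] Phi_class using keysG
        by (intro CollectI exI[of _ "frag_extend Gk f"]) simp
    next
      fix D assume "D \<in> mcarrier (tensor R P Q \<phi>)"
      then obtain f where f: "D = tclass R P Q \<phi> f" "Poly_Mapping.keys f \<subseteq> mcarrier P \<times> carrier Q"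
        unfolding carrierT by blast
      then have "D = Phi (tclass R V Q \<phi> (frag_extend Sk f))" unfolding Phi_class GS[OF f(2)] by simp
      moreover have "tclass R V Q \<phi> (frag_extend Sk f) \<in> mcarrier (tensor R V Q \<phi>)"
        unfolding carrierT[of R V] using keysS[OF f(2)] by blast
      ultimately show "D \<in> Phi ` mcarrier (tensor R V Q \<phi>)" by blast
    qed
  qed
next
  fix C1 C2 assume c1: "C1 \<in> mcarrier (tensor R V Q \<phi>)" and c2: "C2 \<in> mcarrier (tensor R V Q \<phi>)"
  obtain f1 where f1: "C1 = tclass R V Q \<phi> f1" using c1 unfolding carrierT by blast
  obtain f2 where f2: "C2 = tclass R V Q \<phi> f2" using c2 unfolding carrierT by blast
  show "Phi (madd (tensor R V Q \<phi>) C1 C2) = madd (tensor R P Q \<phi>) (Phi C1) (Phi C2)"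
    unfolding f1 f2 madd_class Phi_class by (simp add: frag_extend_add)
next
  fix C q assume c: "C \<in> mcarrier (tensor R V Q \<phi>)" and q: "q \<in> carrier Q"
  obtain f where f: "C = tclass R V Q \<phi> f" using c unfolding carrierT by blast
  have "frag_extend Gk (frag_extend (\<lambda>p. frag_of (fst p, snd p \<otimes>\<^bsub>Q\<^esub> q)) f)
      = frag_extend (\<lambda>p. frag_of (fst p, snd p \<otimes>\<^bsub>Q\<^esub> q)) (frag_extend Gk f)"
  proof -
    have "frag_extend Gk (frag_extend (\<lambda>p. frag_of (fst p, snd p \<otimes>\<^bsub>Q\<^esub> q)) f)
        = frag_extend (Gk o (\<lambda>p. (fst p, snd p \<otimes>\<^bsub>Q\<^esub> q))) f"
      using frag_extend_compose[of Gk "\<lambda>p. (fst p, snd p \<otimes>\<^bsub>Q\<^esub> q)" f] by (simp add: o_def)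
    moreover have "frag_extend (\<lambda>p. frag_of (fst p, snd p \<otimes>\<^bsub>Q\<^esub> q)) (frag_extend Gk f)
        = frag_extend ((\<lambda>p. frag_of (fst p, snd p \<otimes>\<^bsub>Q\<^esub> q)) o (\<lambda>p. (pi (fst p), snd p))) f"
      unfolding Gk_o by (rule frag_extend_compose)
    ultimately show ?thesis by (simp add: Gk_def o_def)
  qed
  then show "Phi (mact (tensor R V Q \<phi>) C q) = mact (tensor R P Q \<phi>) (Phi C) q"
    unfolding f Phi_class mact_class[OF ringQ phi q] Phi_class by simp
qed

end

lemma a_in_S: assumes "ring A" "a \<in> carrier A"
  shows "sigma_pow A \<sigma> n a \<in> S_set A \<sigma> a"
proof -
  interpret ring A by fact
  have "a [^]\<^bsub>A\<^esub> (1::nat) = a" using assms(2) by simp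
  then show ?thesis unfolding S_set_def by (metis (mono_tags, lifting) mem_Collect_eq)
qed

lemma cprod_in: assumes "ring A" "a \<in> carrier A"
  shows "cprod A \<sigma> a l \<in> mult_closure A (S_set A \<sigma> a)"
proof (induction l)
  case 0
  have "sigma_pow A \<sigma> 0 a = a" unfolding sigma_pow_def by simp
  then show ?case using a_in_S[OF assms, of \<sigma> 0] by (simp add: mult_closure.gen)
next
  case (Suc l)
  then show ?case using a_in_S[OF assms] by (simp add: mult_closure.gen mult_closure.mult)
qed

lemma gwa_incl_carrier: "gwa_incl A \<sigma> a u \<in> carrier (GWA A \<sigma> a)"
  unfolding gwa_incl_def GWA_def FactRing_def A_RCOSETS_def RCOSETS_def a_r_coset_def
  by (auto simp: free_ring_def)

theorem proposition2p4:
  fixes A :: "('a, 'b) ring_scheme" and \<sigma> :: "'a \<Rightarrow> 'a" and a :: 'a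
    and V :: "('m, 'a fword set, 'd) rmodule_scheme"
    and Q :: "('q, 'e) ring_scheme" and \<phi> :: "'a fword set \<Rightarrow> 'q"
  assumes "ring A"
    and "\<sigma> \<in> ring_iso A A"
    and "a \<in> center A"
    and "right_ring_of_fractions (GWA A \<sigma> a)
           (gwa_incl A \<sigma> a ` mult_closure A (S_set A \<sigma> a)) Q \<phi>"
    and "right_module (GWA A \<sigma> a) V"
  shows "rmodule_iso Q
           (tensor (GWA A \<sigma> a) V Q \<phi>)
           (tensor (GWA A \<sigma> a)
              (quotient_module V (gen_submodule (GWA A \<sigma> a) V
                 (Vlev_e A \<sigma> a V (height A \<sigma> a V))))
              Q \<phi>)"
proof -
  let ?R = "GWA A \<sigma> a"
  let ?N = "gen_submodule ?R V (Vlev_e A \<sigma> a V (height A \<sigma> a V))"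
  let ?rel = "tensor_rel ?R V Q \<phi>"
  have aA: "a \<in> carrier A" using assms(3) unfolding center_def by blast
  have rQ: "ring Q" using assms(4) unfolding right_ring_of_fractions_def by blast
  have hom: "\<phi> \<in> ring_hom ?R Q" using assms(4) unfolding right_ring_of_fractions_def by blast
  have phi: "\<phi> \<in> carrier ?R \<rightarrow> carrier Q" using hom unfolding ring_hom_def by blast
  have units: "\<And>t. t \<in> gwa_incl A \<sigma> a ` mult_closure A (S_set A \<sigma> a) \<Longrightarrow> \<phi> t \<in> Units Q"
    using assms(4) unfolding right_ring_of_fractions_def by blast
  have m: "right_module ?R V" by fact
  have zc: "mzero V \<in> mcarrier V" using m unfolding right_module_def by blast
  have ac: "\<And>x y. x \<in> mcarrier V \<Longrightarrow> y \<in> mcarrier V \<Longrightarrow> madd V x y \<in> mcarrier V"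
    using m unfolding right_module_def by auto
  have actc: "\<And>x r. x \<in> mcarrier V \<Longrightarrow> r \<in> carrier ?R \<Longrightarrow> mact V x r \<in> mcarrier V"
    using m unfolding right_module_def by auto
  have zz: "madd V (mzero V) (mzero V) = mzero V" using m zc unfolding right_module_def by auto
  have lev: "\<exists>l. v \<in> Vlev A \<sigma> a V l" if "v \<in> Vlev_e A \<sigma> a V (height A \<sigma> a V)" for v
    using that unfolding Vlev_e_def Vinf_def by (cases "height A \<sigma> a V") auto
  have Nsub: "?N \<subseteq> mcarrier V"
  proof
    fix n assume "n \<in> ?N"
    then show "n \<in> mcarrier V"
    proof (induction n rule: gen_submodule.induct)
      case (base b) then show ?case using lev unfolding Vlev_def by blast
    next
      case zero then show ?case by (rule zc)
    next
      case (add x y) then show ?case using ac by blast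
    next
      case (act x r) then show ?case using actc by blast
    qed
  qed
  have gen1: "tgen (madd V x y) q - tgen x q - tgen y q \<in> ?rel"
    if "x \<in> mcarrier V" "y \<in> mcarrier V" "q \<in> carrier Q" for x y q
    by (rule tensor_rel.gen) (unfold tensor_gens_def, use that in blast)
  have gen3: "tgen (mact V x r) q - tgen x (\<phi> r \<otimes>\<^bsub>Q\<^esub> q) \<in> ?rel"
    if "x \<in> mcarrier V" "r \<in> carrier ?R" "q \<in> carrier Q" for x r q
    by (rule tensor_rel.gen) (unfold tensor_gens_def, use that in blast)
  have t0: "tgen (mzero V) q \<in> ?rel" if q: "q \<in> carrier Q" for q
  proof -
    have "- (tgen (madd V (mzero V) (mzero V)) q - tgen (mzero V) q - tgen (mzero V) q) \<in> ?rel"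
      using gen1[OF zc zc q] by (rule tensor_rel.neg)
    then show ?thesis using zz by simp
  qed
  have Nkill: "\<forall>q\<in>carrier Q. tgen n q \<in> ?rel" if "n \<in> ?N" for n
    using that
  proof (induction n rule: gen_submodule.induct)
    case (base b)
    obtain l where l: "b \<in> Vlev A \<sigma> a V l" using lev base by blast
    define c where "c = gwa_incl A \<sigma> a (cprod A \<sigma> a l)"
    have bc: "b \<in> mcarrier V" and bz: "mact V b c = mzero V" using l unfolding Vlev_def c_def by auto
    have cR: "c \<in> carrier ?R" unfolding c_def by (rule gwa_incl_carrier)
    have cU: "\<phi> c \<in> Units Q" unfolding c_def using units cprod_in[OF assms(1) aA] by blast
    show ?case
    proof
      fix q assume q: "q \<in> carrier Q"
      interpret Q: ring Q by (rule rQ)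
      define q' where "q' = inv\<^bsub>Q\<^esub> (\<phi> c) \<otimes>\<^bsub>Q\<^esub> q"
      have q'c: "q' \<in> carrier Q" unfolding q'_def using cU q by auto
      have "\<phi> c \<otimes>\<^bsub>Q\<^esub> q' = q" unfolding q'_def using cU q
        by (simp add: Q.m_assoc[symmetric] Q.Units_r_inv Q.Units_closed Q.Units_inv_closed)
      then have "tgen (mzero V) q' - tgen b q \<in> ?rel" using gen3[OF bc cR q'c] bz by simp
      then have "tgen (mzero V) q' - (tgen (mzero V) q' - tgen b q) \<in> ?rel"
        by (rule rel_diff[OF t0[OF q'c]])
      then show "tgen b q \<in> ?rel" by simp
    qed
  next
    case zero then show ?case using t0 by blast
  next
    case (add x y)
    have xc: "x \<in> mcarrier V" "y \<in> mcarrier V" using add.hyps Nsub by auto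
    show ?case
    proof
      fix q assume q: "q \<in> carrier Q"
      have "(tgen (madd V x y) q - tgen x q - tgen y q) + (tgen x q + tgen y q) \<in> ?rel"
        using gen1[OF xc q] add.IH q by (intro tensor_rel.add) auto
      then show "tgen (madd V x y) q \<in> ?rel" by simp
    qed
  next
    case (act x r)
    have xc: "x \<in> mcarrier V" using act.hyps Nsub by auto
    show ?case
    proof
      fix q assume q: "q \<in> carrier Q"
      have pq: "\<phi> r \<otimes>\<^bsub>Q\<^esub> q \<in> carrier Q" using phi act.hyps q ring.ring_simprules(5)[OF rQ] by blast
      have "(tgen (mact V x r) q - tgen x (\<phi> r \<otimes>\<^bsub>Q\<^esub> q)) + tgen x (\<phi> r \<otimes>\<^bsub>Q\<^esub> q) \<in> ?rel"
        using gen3[OF xc act.hyps(2) q] act.IH pq by (intro tensor_rel.add) auto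
      then show "tgen (mact V x r) q \<in> ?rel" by simp
    qed
  qed
  have qsI: "qs ?R V Q \<phi> ?N" unfolding qs_def
    using m rQ phi Nsub Nkill by (auto intro: gen_submodule.intros)
  interpret qs ?R V Q \<phi> ?N by (rule qsI)
  show ?thesis by (rule iso)
qed

end
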